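(* Let $D=(V,E;s,t)$, $N$, $\mathscr{B}$ be as in the context with $\sigma_N\ge2$, and let $k\ge1$. For every $x\in\widetilde X_k$ and every $(u,v)\in J\setminus J_k$, $$\phi_x(u)-\phi_x(v)\ \ge\ \min\Big\{\min_{O\in\bigcup_{e\in N\setminus N_k}\mathcal{O}^e_k}\mathrm{re}_x(O),\ \min_{R\in\bigcup_{(u',v')\in J\setminus J_k}\mathcal{R}^{(u',v')}_k}\mathrm{re}_x(R)\Big\}.$$
   Context: $D=(V,E;s,t)$ is a directed network with unit arc capacities (parallel arcs allowed); $N\subseteq E$ is the set of private arcs (players), $M=E\setminus N$ public arcs; every $s$-$t$ path contains an arc of $N$ and every arc lies on some $s$-$t$ path. A path is a set of arcs joining distinct vertices along one direction. $\sigma_N$ is the maximum number of $s$-$t$ paths pairwise sharing no arc of $N$. For $S\subseteq N$, $\gamma(S)$ is the maximum number of pairwise arc-disjoint $s$-$t$ paths in $D_S=(V,S\cup M;s,t)$. Auxiliary game $\widetilde\Gamma_D=(N,\tilde\gamma)$: $\tilde\gamma(N)=\sigma_N$, $\tilde\gamma(S)=\gamma(S)$ for $S\subsetneq N$; $x(S)=\sum_{i\in S}x_i$; $\chi(\widetilde\Gamma_D)=\{x\in\mathbb{R}^N_{\ge0}:x(N)=\sigma_N\}$. Relative excess: $\mathrm{re}_x(S)=(x(S)-\tilde\gamma(S))/\tilde\gamma(S)$ if $\tilde\gamma(S)>0$, $+\infty$ otherwise; a minimum over an empty collection is $+\infty$. $\mathrm{fix}(X)=\{S\subseteq N: x(S)\text{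 constant on }X\}$. Sequential LPs: $\widetilde X_0=\chi(\widetilde\Gamma_D)$, $\mathrm{fix}(\widetilde X_0)=\{\emptyset,N\}$; $\widetilde{LP}_{k+1}$ maximizes $\epsilon$ s.t. $x(S)\ge(1+\epsilon)\tilde\gamma(S)$ for $S\in2^N\setminus\mathrm{fix}(\widetilde X_k)$, $x\in\widetilde X_k$; $\epsilon_{k+1}$ is the optimum, $\widetilde X_{k+1}$ the set of $x$ with $(x,\epsilon_{k+1})$ optimal. Potential $\phi_x(v)$: length of a shortest $s$-$v$ path when arcs $e\in N$ have length $x(e)$, public arcs length $0$. Fix a maximum family $\mathscr{B}$ of $s$-$t$ paths pairwise sharing no arc of $N$. A $u$-$v$ jump is a $u$-$v$ path whose end vertices lie on paths of $\mathscr{B}$, with no intermediate vertex on a path of $\mathscr{B}$, and which is not a single arc of a path of $\mathscr{B}$; $(u,v)$ is its jump pair; $\mathscr{J}$ = all jumps, $J$ = all jump pairs. $N_k=\{e\in N: x(e)\text{ constant on }\widetilde X_k\}$, $J_k=\{(u,v)\in J:\phi_x(u)-\phi_x(v)\text{ constant on }\widetilde X_k\}$. $D_k$ is obtained from $D$ by deleting all arcs of all $u$-$v$ jumps in $\mathscr{J}$ with $(u,v)\notin J_k$. For $e\in N\setminus N_k$: $\mathcal{O}^e_k=\{(N\cap F)\cup\{e\}\}$, $F$ ranging over arc sets of families of pairwise arc-disjoint $s$-$t$ paths in $D_k-e$. For $(u,v)\in J\setminus J_k$: $\mathcal{R}^{(u,v)}_k=\{N\cap F\}$, $F$ ranging over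 arc sets of families of pairwise arc-disjoint $s$-$t$ paths in the network obtained from $D_k$ by adding the arcs of some $u$-$v$ jump $Q\in\mathscr{J}$, one path of the family containing $Q$. *)

theory Defs
  imports "HOL-Analysis.Analysis"
begin

text \<open>A directed network D = (V,E;s,t) with parallel arcs allowed: arcs are elements
  of an abstract type, with tail and head maps.\<close>

record ('v,'e) network =
  verts :: "'v set"
  arcs  :: "'e set"
  tail  :: "'e \<Rightarrow> 'v"
  head  :: "'e \<Rightarrow> 'v"
  src   :: 'v
  snk   :: 'v

fun walk :: "('v,'e) network \<Rightarrow> 'v \<Rightarrow> 'e list \<Rightarrow> 'v \<Rightarrow> bool" where
  "walk D u [] w = (u = w)"
| "walk D u (e # es) w = (tail D e = u \<and> walk D (head D e) es w)"

definition is_path :: "('v,'e) network \<Rightarrow> 'e set \<Rightarrow> 'v \<Rightarrow> 'v \<Rightarrow> 'e list \<Rightarrow> bool" where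
  "is_path D A u w es \<longleftrightarrow> es \<noteq> [] \<and> set es \<subseteq> A \<and> walk D u es w \<and> distinct (u # map (head D) es)"

definition disj_family :: "('v,'e) network \<Rightarrow> 'e set \<Rightarrow> 'e list list \<Rightarrow> bool" where
  "disj_family D A Ps \<longleftrightarrow> (\<forall>p\<in>set Ps. is_path D A (src D) (snk D) p) \<and>
     (\<forall>i<length Ps. \<forall>j<length Ps. i \<noteq> j \<longrightarrow> set (Ps!i) \<inter> set (Ps!j) = {})"

definition Ndisj_family :: "('v,'e) network \<Rightarrow> 'e set \<Rightarrow> 'e list list \<Rightarrow> bool" where
  "Ndisj_family D N Ps \<longleftrightarrow> (\<forall>p\<in>set Ps. is_path D (arcs D) (src D) (snk D) p) \<and>
     (\<forall>i<length Ps. \<forall>j<length Ps. i \<noteq> j \<longrightarrow> set (Ps!i) \<inter> set (Ps!j) \<inter> N = {})"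

definition sigmaN :: "('v,'e) network \<Rightarrow> 'e set \<Rightarrow> nat" where
  "sigmaN D N = Max {length Ps | Ps. Ndisj_family D N Ps}"

definition gamma :: "('v,'e) network \<Rightarrow> 'e set \<Rightarrow> 'e set \<Rightarrow> nat" where
  "gamma D N S = Max {length Ps | Ps. disj_family D (S \<union> (arcs D - N)) Ps}"

definition gt :: "('v,'e) network \<Rightarrow> 'e set \<Rightarrow> 'e set \<Rightarrow> real" where
  "gt D N S = (if S = N then real (sigmaN D N) else real (gamma D N S))"

definition chi :: "('v,'e) network \<Rightarrow> 'e set \<Rightarrow> ('e \<Rightarrow> real) set" where
  "chi D N = {x. (\<forall>e. e \<notin> N \<longrightarrow> x e = 0) \<and> (\<forall>e\<in>N. x e \<ge> 0) \<and> sum x N = real (sigmaN D N)}"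

definition fixset :: "'e set \<Rightarrow> ('e \<Rightarrow> real) set \<Rightarrow> 'e set set" where
  "fixset N X = {S. S \<subseteq> N \<and> (\<exists>c. \<forall>x\<in>X. sum x S = c)}"

definition lp_feasible :: "('v,'e) network \<Rightarrow> 'e set \<Rightarrow> ('e \<Rightarrow> real) set \<Rightarrow> ('e \<Rightarrow> real) \<Rightarrow> real \<Rightarrow> bool" where
  "lp_feasible D N X x \<epsilon> \<longleftrightarrow> x \<in> X \<and>
     (\<forall>S. S \<subseteq> N \<and> S \<notin> fixset N X \<longrightarrow> sum x S \<ge> (1 + \<epsilon>) * gt D N S)"

text \<open>The sets X_k: X_{k+1} is the set of x such that (x, eps) is optimal for LP_{k+1}.\<close>
primrec Xseq :: "('v,'e) network \<Rightarrow> 'e set \<Rightarrow> nat \<Rightarrow> ('e \<Rightarrow> real) set" where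
  "Xseq D N 0 = chi D N"
| "Xseq D N (Suc k) = {x. \<exists>\<epsilon>. lp_feasible D N (Xseq D N k) x \<epsilon> \<and>
      (\<forall>y \<delta>. lp_feasible D N (Xseq D N k) y \<delta> \<longrightarrow> \<delta> \<le> \<epsilon>)}"

definition re :: "('v,'e) network \<Rightarrow> 'e set \<Rightarrow> ('e \<Rightarrow> real) \<Rightarrow> 'e set \<Rightarrow> ereal" where
  "re D N x S = (if gt D N S > 0 then ereal ((sum x S - gt D N S) / gt D N S) else \<infinity>)"

definition phi :: "('v,'e) network \<Rightarrow> 'e set \<Rightarrow> ('e \<Rightarrow> real) \<Rightarrow> 'v \<Rightarrow> real" where
  "phi D N x v = (if v = src D then 0 else
     Inf {sum_list (map (\<lambda>e. if e \<in> N then x e else 0) p) | p. is_path D (arcs D) (src D) v p})"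

definition on_B :: "('v,'e) network \<Rightarrow> 'e list list \<Rightarrow> 'v \<Rightarrow> bool" where
  "on_B D B w \<longleftrightarrow> (\<exists>p\<in>set B. w \<in> set (src D # map (head D) p))"

definition is_jump :: "('v,'e) network \<Rightarrow> 'e list list \<Rightarrow> 'v \<Rightarrow> 'v \<Rightarrow> 'e list \<Rightarrow> bool" where
  "is_jump D B u v Q \<longleftrightarrow> is_path D (arcs D) u v Q \<and> on_B D B u \<and> on_B D B v \<and>
     (\<forall>w\<in>set (butlast (map (head D) Q)). \<not> on_B D B w) \<and>
     \<not> (\<exists>e. Q = [e] \<and> (\<exists>p\<in>set B. e \<in> set p))"

definition Jpairs :: "('v,'e) network \<Rightarrow> 'e list list \<Rightarrow> ('v \<times> 'v) set" where
  "Jpairs D B = {(u,v). \<exists>Q. is_jump D B u v Q}"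

definition Nk :: "('v,'e) network \<Rightarrow> 'e set \<Rightarrow> nat \<Rightarrow> 'e set" where
  "Nk D N k = {e\<in>N. \<exists>c. \<forall>x\<in>Xseq D N k. x e = c}"

definition Jk :: "('v,'e) network \<Rightarrow> 'e set \<Rightarrow> 'e list list \<Rightarrow> nat \<Rightarrow> ('v \<times> 'v) set" where
  "Jk D N B k = {(u,v)\<in>Jpairs D B. \<exists>c. \<forall>x\<in>Xseq D N k. phi D N x u - phi D N x v = c}"

definition Ek :: "('v,'e) network \<Rightarrow> 'e set \<Rightarrow> 'e list list \<Rightarrow> nat \<Rightarrow> 'e set" where
  "Ek D N B k = arcs D - \<Union>{set Q | Q u v. is_jump D B u v Q \<and> (u,v) \<notin> Jk D N B k}"

definition Ofam :: "('v,'e) network \<Rightarrow> 'e set \<Rightarrow> 'e list list \<Rightarrow> nat \<Rightarrow> 'e \<Rightarrow> 'e set set" where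
  "Ofam D N B k e = {(N \<inter> \<Union>(set ` set Ps)) \<union> {e} | Ps. disj_family D (Ek D N B k - {e}) Ps}"

definition Rfam :: "('v,'e) network \<Rightarrow> 'e set \<Rightarrow> 'e list list \<Rightarrow> nat \<Rightarrow> 'v \<Rightarrow> 'v \<Rightarrow> 'e set set" where
  "Rfam D N B k u v = {N \<inter> \<Union>(set ` set Ps) | Ps Q. is_jump D B u v Q \<and>
      disj_family D (Ek D N B k \<union> set Q) Ps \<and> (\<exists>P\<in>set Ps. set Q \<subseteq> set P)}"

end

theory Submission
  imports Defs "HOL-Library.Transitive_Closure_Table"
begin


lemma walk_append: "walk D a (L1 @ L2) c \<longleftrightarrow> (\<exists>b. walk D a L1 b \<and> walk D b L2 c)"
  by (induction L1 arbitrary: a) auto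

lemma walk_mem: "walk D a L b \<Longrightarrow> e \<in> set L \<Longrightarrow>
   tail D e \<in> set (a # map (head D) L) \<and> head D e \<in> set (map (head D) L)"
  by (induction L arbitrary: a) auto

lemma walk_end: "walk D a L b \<Longrightarrow> b \<in> set (a # map (head D) L)"
  by (induction L arbitrary: a) auto

lemma walk_Nil_end: "walk D a L b \<Longrightarrow> L \<noteq> [] \<Longrightarrow> b = last (map (head D) L)"
proof (induction L arbitrary: a)
  case Nil then show ?case by simp
next
  case (Cons e L) then show ?case by (cases L) auto
qed

lemma walk_split_vertex:
  "walk D a L b \<Longrightarrow> w \<in> set (a # map (head D) L) \<Longrightarrow>
   \<exists>L1 L2. L = L1 @ L2 \<and> walk D a L1 w \<and> walk D w L2 b"
proof (induction L arbitrary: a)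
  case Nil then show ?case by auto
next
  case (Cons e L)
  show ?case
  proof (cases "w = a")
    case True
    have "e # L = [] @ (e#L) \<and> walk D a [] w \<and> walk D w (e#L) b" using Cons.prems True by simp
    then show ?thesis by blast
  next
    case False
    then have "w \<in> set (head D e # map (head D) L)" using Cons.prems by auto
    moreover have "walk D (head D e) L b" using Cons.prems by auto
    ultimately obtain L1 L2 where "L = L1 @ L2" "walk D (head D e) L1 w" "walk D w L2 b"
      using Cons.IH by blast
    moreover have "walk D a (e # L1) w" using Cons.prems \<open>walk D (head D e) L1 w\<close> by simp
    ultimately show ?thesis by (metis append_Cons)
  qed
qed

definition arel :: "('v,'e) network \<Rightarrow> 'e set \<Rightarrow> 'v \<Rightarrow> 'v \<Rightarrow> bool" where
  "arel D A x y \<longleftrightarrow> (\<exists>e\<in>A. tail D e = x \<and> head D e = y)"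

lemma walk_rtp: "walk D a L b \<Longrightarrow> set L \<subseteq> A \<Longrightarrow> rtrancl_path (arel D A) a (map (head D) L) b"
proof (induction L arbitrary: a)
  case Nil then show ?case by (auto intro: rtrancl_path.base)
next
  case (Cons e L)
  have "rtrancl_path (arel D A) (head D e) (map (head D) L) b" using Cons by auto
  moreover have "arel D A a (head D e)" using Cons.prems by (auto simp: arel_def)
  ultimately show ?case by (simp add: rtrancl_path.step)
qed

lemma rtp_walk: "rtrancl_path (arel D A) a vs b \<Longrightarrow> \<exists>L. walk D a L b \<and> set L \<subseteq> A \<and> map (head D) L = vs"
proof (induction rule: rtrancl_path.induct)
  case (base x) then show ?case by (intro exI[of _ "[]"]) auto
next
  case (step x y ys z)
  then obtain L where "walk D y L z" "set L \<subseteq> A" "map (head D) L = ys" by blast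
  moreover obtain e where "e \<in> A" "tail D e = x" "head D e = y" using step(1) by (auto simp: arel_def)
  ultimately show ?case by (intro exI[of _ "e # L"]) auto
qed

lemma walk_to_path:
  assumes "walk D a L b"
  obtains L' where "walk D a L' b" "set L' \<subseteq> set L" "distinct (a # map (head D) L')"
proof -
  have "rtrancl_path (arel D (set L)) a (map (head D) L) b" using walk_rtp[OF assms] by simp
  then obtain vs where vs: "rtrancl_path (arel D (set L)) a vs b" "distinct (a # vs)"
    by (rule rtrancl_path_distinct)
  obtain L' where L': "walk D a L' b" "set L' \<subseteq> set L" "map (head D) L' = vs"
    using rtp_walk[OF vs(1)] by blast
  have "distinct (a # map (head D) L')" using L'(3) vs(2) by simp
  then show ?thesis using that[of L'] L'(1,2) by blast
qed

lemma distinct_arcs: "distinct (a # map (head D) L) \<Longrightarrow> distinct L"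
  by (metis distinct.simps(2) distinct_map)

lemma sum_list_ge_sum_set:
  fixes f :: "'a \<Rightarrow> real"
  assumes "\<forall>e\<in>set L. f e \<ge> 0"
  shows "sum f (set L) \<le> sum_list (map f L)"
  using assms
proof (induction L)
  case Nil then show ?case by simp
next
  case (Cons a L)
  show ?case
  proof (cases "a \<in> set L")
    case True
    have "f a \<ge> 0" using Cons.prems by auto
    have "sum f (set (a#L)) = sum f (set L)" using True by (simp add: insert_absorb)
    moreover have "sum f (set L) \<le> sum_list (map f L)" using Cons by auto
    ultimately show ?thesis using \<open>f a \<ge> 0\<close> by simp
  next
    case False then show ?thesis using Cons by simp
  qed
qed

lemma sum_list_ge_elem:
  fixes f :: "'a \<Rightarrow> real"
  assumes "\<forall>e\<in>set L. f e \<ge> 0" "e \<in> set L"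
  shows "f e \<le> sum_list (map f L)"
proof -
  have "f e \<le> sum f (set L)" using assms by (intro member_le_sum) auto
  then show ?thesis using sum_list_ge_sum_set[OF assms(1)] by linarith
qed



lemma len_le_card:
  assumes "finite F"
    and "\<forall>i<length Ps. set (Ps!i) \<inter> F \<noteq> {}"
    and "\<forall>i<length Ps. \<forall>j<length Ps. i \<noteq> j \<longrightarrow> set (Ps!i) \<inter> set (Ps!j) \<inter> F = {}"
  shows "length Ps \<le> card F"
proof -
  define c where "c i = (SOME e. e \<in> set (Ps!i) \<inter> F)" for i
  have c: "c i \<in> set (Ps!i) \<inter> F" if "i < length Ps" for i
    unfolding c_def using assms(2) that by (metis ex_in_conv someI_ex)
  have "inj_on c {..<length Ps}"
  proof (rule inj_onI)
    fix i j assume ij: "i \<in> {..<length Ps}" "j \<in> {..<length Ps}" "c i = c j"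
    show "i = j"
    proof (rule ccontr)
      assume "i \<noteq> j"
      then have "set (Ps!i) \<inter> set (Ps!j) \<inter> F = {}" using assms(3) ij by auto
      moreover have "c i \<in> set (Ps!i) \<inter> set (Ps!j) \<inter> F" using c[of i] c[of j] ij by auto
      ultimately show False by blast
    qed
  qed
  moreover have "c ` {..<length Ps} \<subseteq> F" using c by auto
  ultimately have "card {..<length Ps} \<le> card F" using assms(1) by (intro card_inj_on_le) auto
  then show ?thesis by simp
qed

lemma is_path_mono: "is_path D A u w p \<Longrightarrow> A \<subseteq> A' \<Longrightarrow> is_path D A' u w p"
  unfolding is_path_def by auto

lemma disj_family_single: "is_path D A (src D) (snk D) p \<Longrightarrow> disj_family D A [p]"
  unfolding disj_family_def by auto

locale netw =
  fixes D :: "('v,'e) network" and N :: "'e set" and B :: "'e list list"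
  assumes finV: "finite (verts D)" and finA: "finite (arcs D)"
    and ends: "\<forall>e\<in>arcs D. tail D e \<in> verts D \<and> head D e \<in> verts D"
    and sV: "src D \<in> verts D" and tV: "snk D \<in> verts D" and st: "src D \<noteq> snk D"
    and NA: "N \<subseteq> arcs D"
    and hitN: "\<forall>p. is_path D (arcs D) (src D) (snk D) p \<longrightarrow> set p \<inter> N \<noteq> {}"
    and sig2: "sigmaN D N \<ge> 2"
    and Bfam: "Ndisj_family D N B" and Blen: "length B = sigmaN D N"
begin

abbreviation "s \<equiv> src D"
abbreviation "t \<equiv> snk D"
abbreviation "\<sigma> \<equiv> sigmaN D N"

lemma finN: "finite N" using NA finA finite_subset by blast

lemma ndisj_len: "Ndisj_family D N Ps \<Longrightarrow> length Ps \<le> card N"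
proof -
  assume a: "Ndisj_family D N Ps"
  show ?thesis
  proof (rule len_le_card[OF finN])
    show "\<forall>i<length Ps. set (Ps!i) \<inter> N \<noteq> {}" using a hitN unfolding Ndisj_family_def by auto
    show "\<forall>i<length Ps. \<forall>j<length Ps. i \<noteq> j \<longrightarrow> set (Ps!i) \<inter> set (Ps!j) \<inter> N = {}"
      using a unfolding Ndisj_family_def by blast
  qed
qed

lemma sigma_ge: "Ndisj_family D N Ps \<Longrightarrow> length Ps \<le> \<sigma>"
proof -
  assume a: "Ndisj_family D N Ps"
  have "{length Ps | Ps. Ndisj_family D N Ps} \<subseteq> {..card N}" using ndisj_len by auto
  then have "finite {length Ps | Ps. Ndisj_family D N Ps}" using finite_subset by blast
  then show ?thesis unfolding sigmaN_def using a by (intro Max_ge) auto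
qed

lemma disj_len: "disj_family D A Ps \<Longrightarrow> A \<subseteq> arcs D \<Longrightarrow> length Ps \<le> card (arcs D)"
proof -
  assume a: "disj_family D A Ps" "A \<subseteq> arcs D"
  show ?thesis
  proof (rule len_le_card[OF finA])
    have "Ps!i \<noteq> [] \<and> set (Ps!i) \<subseteq> arcs D" if "i < length Ps" for i
      using a that unfolding disj_family_def is_path_def by (meson nth_mem order_trans)
    then show "\<forall>i<length Ps. set (Ps!i) \<inter> arcs D \<noteq> {}" by (metis inf.absorb1 set_empty)
    show "\<forall>i<length Ps. \<forall>j<length Ps. i \<noteq> j \<longrightarrow> set (Ps!i) \<inter> set (Ps!j) \<inter> arcs D = {}"
      using a unfolding disj_family_def by blast
  qed
qed

lemma gamma_ge: "disj_family D (S \<union> (arcs D - N)) Ps \<Longrightarrow> S \<subseteq> arcs D \<Longrightarrow> length Ps \<le> gamma D N S"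
proof -
  assume a: "disj_family D (S \<union> (arcs D - N)) Ps" "S \<subseteq> arcs D"
  have "{length Ps | Ps. disj_family D (S \<union> (arcs D - N)) Ps} \<subseteq> {..card (arcs D)}"
    using disj_len a(2) by fastforce
  then have "finite {length Ps | Ps. disj_family D (S \<union> (arcs D - N)) Ps}" using finite_subset by blast
  then show ?thesis unfolding gamma_def using a by (intro Max_ge) auto
qed

lemma gamma_le: "(\<And>Ps. disj_family D (S \<union> (arcs D - N)) Ps \<Longrightarrow> length Ps \<le> m) \<Longrightarrow> gamma D N S \<le> m"
proof -
  assume a: "\<And>Ps. disj_family D (S \<union> (arcs D - N)) Ps \<Longrightarrow> length Ps \<le> m"
  have "{length Ps | Ps. disj_family D (S \<union> (arcs D - N)) Ps} \<subseteq> {..m}" using a by auto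
  then have "finite {length Ps | Ps. disj_family D (S \<union> (arcs D - N)) Ps}" using finite_subset by blast
  moreover have "disj_family D (S \<union> (arcs D - N)) []" unfolding disj_family_def by simp
  ultimately show ?thesis unfolding gamma_def using a by (subst Max_le_iff) auto
qed

lemma Bpath: "p \<in> set B \<Longrightarrow> is_path D (arcs D) s t p"
  using Bfam unfolding Ndisj_family_def by auto

lemma Bdisj: "i < \<sigma> \<Longrightarrow> j < \<sigma> \<Longrightarrow> i \<noteq> j \<Longrightarrow> set (B!i) \<inter> set (B!j) \<inter> N = {}"
  using Bfam Blen unfolding Ndisj_family_def by auto

end


lemma walk_cross: "walk D a L b \<Longrightarrow> a \<in> R \<Longrightarrow> b \<notin> R \<Longrightarrow> \<exists>e\<in>set L. tail D e \<in> R \<and> head D e \<notin> R"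
  by (induction L arbitrary: a) auto

lemma walk_stay: "walk D a L b \<Longrightarrow> a \<notin> R \<Longrightarrow> (\<forall>e\<in>set L. head D e \<in> R \<longrightarrow> tail D e \<in> R) \<Longrightarrow> b \<notin> R"
  by (induction L arbitrary: a) auto

lemma walk_mid: "walk D a (L1 @ e # M @ e' # L2) b \<Longrightarrow> walk D (head D e) M (tail D e')"
proof -
  assume "walk D a (L1 @ e # M @ e' # L2) b"
  then obtain c where "walk D c (e # M @ e' # L2) b" using walk_append by metis
  then have "walk D (head D e) (M @ e' # L2) b" by simp
  then obtain c' where "walk D (head D e) M c'" "walk D c' (e' # L2) b" using walk_append by metis
  then show ?thesis by simp
qed

lemma count_distinct: "distinct xs \<Longrightarrow> count_list xs x = (if x \<in> set xs then 1 else 0)"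
  by (induction xs) auto

lemma sum_list_two:
  fixes h :: "'a \<Rightarrow> nat"
  assumes "i < length Ps" "j < length Ps" "i \<noteq> j"
  shows "h (Ps!i) + h (Ps!j) \<le> sum_list (map h Ps)"
proof -
  have "sum_list (map h Ps) = (\<Sum>k = 0..<length Ps. h (Ps!k))"
    by (simp add: sum_list_sum_nth)
  moreover have "(\<Sum>k\<in>{i,j}. h (Ps!k)) \<le> (\<Sum>k = 0..<length Ps. h (Ps!k))"
    using assms by (intro sum_mono2) auto
  ultimately show ?thesis using assms(3) by simp
qed

lemma count_le_sum: "p \<in> set Ps \<Longrightarrow> count_list p e \<le> sum_list (map (\<lambda>p. count_list p e) Ps)"
  by (induction Ps) auto

lemma sum_pos_ex: "sum_list (map (h::'a\<Rightarrow>nat) Ps) \<noteq> 0 \<Longrightarrow> \<exists>p\<in>set Ps. h p \<noteq> 0"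
  by (induction Ps) auto

fun cw :: "('v \<Rightarrow> 'v \<Rightarrow> 'e \<times> bool) \<Rightarrow> 'v \<Rightarrow> 'v list \<Rightarrow> 'e \<Rightarrow> int" where
  "cw st a [] e = 0"
| "cw st a (b # vs) e = (if e = fst (st a b) then (if snd (st a b) then 1 else -1) else 0) + cw st b vs e"

context netw
begin

definition net :: "('e \<Rightarrow> int) \<Rightarrow> 'v \<Rightarrow> int" where
  "net g v = (\<Sum>e\<in>{e\<in>arcs D. tail D e = v}. g e) - (\<Sum>e\<in>{e\<in>arcs D. head D e = v}. g e)"

lemma net_add: "net (\<lambda>e. g1 e + g2 e) v = net g1 v + net g2 v"
  unfolding net_def by (simp add: sum.distrib)

lemma net_diff: "net (\<lambda>e. g1 e - g2 e) v = net g1 v - net g2 v"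
  unfolding net_def by (simp add: sum_subtractf)

lemma net_zero: "net (\<lambda>e. 0) v = 0"
  unfolding net_def by simp

lemma net_ind: "e0 \<in> arcs D \<Longrightarrow> net (\<lambda>e. if e = e0 then c else 0) v =
   (if tail D e0 = v then c else 0) - (if head D e0 = v then c else 0)"
proof -
  assume e0: "e0 \<in> arcs D"
  have f1: "finite {e\<in>arcs D. tail D e = v}" "finite {e\<in>arcs D. head D e = v}" using finA by auto
  have "(\<Sum>e\<in>{e\<in>arcs D. tail D e = v}. if e = e0 then c else 0) = (if tail D e0 = v then c else 0)"
    using e0 by (simp add: sum.delta[OF f1(1)])
  moreover have "(\<Sum>e\<in>{e\<in>arcs D. head D e = v}. if e = e0 then c else 0) = (if head D e0 = v then c else 0)"
    using e0 by (simp add: sum.delta[OF f1(2)])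
  ultimately show ?thesis unfolding net_def by simp
qed

lemma net_walk: "walk D a L b \<Longrightarrow> set L \<subseteq> arcs D \<Longrightarrow>
   net (\<lambda>e. int (count_list L e)) v = of_bool (v = a) - of_bool (v = b)"
proof (induction L arbitrary: a)
  case Nil then show ?case by (simp add: net_zero)
next
  case (Cons e0 L)
  have e0: "e0 \<in> arcs D" "tail D e0 = a" using Cons.prems by auto
  have "(\<lambda>e. int (count_list (e0 # L) e)) = (\<lambda>e. (if e = e0 then 1 else 0) + int (count_list L e))"
    by auto
  then have "net (\<lambda>e. int (count_list (e0 # L) e)) v =
     net (\<lambda>e. if e = e0 then 1 else 0) v + net (\<lambda>e. int (count_list L e)) v"
    by (simp add: net_add)
  also have "\<dots> = ((if tail D e0 = v then 1 else 0) - (if head D e0 = v then 1 else 0))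
      + (of_bool (v = head D e0) - of_bool (v = b))"
    using net_ind[OF e0(1), of 1 v] Cons by auto
  finally show ?case using e0 by auto
qed

lemma net_fam: "(\<forall>p\<in>set Ps. is_path D (arcs D) s t p) \<Longrightarrow>
  net (\<lambda>e. int (sum_list (map (\<lambda>p. count_list p e) Ps))) v = int (length Ps) * (of_bool (v = s) - of_bool (v = t))"
proof (induction Ps)
  case Nil then show ?case by (simp add: net_zero)
next
  case (Cons p Ps)
  have "net (\<lambda>e. int (sum_list (map (\<lambda>p. count_list p e) (p # Ps)))) v =
     net (\<lambda>e. int (count_list p e) + int (sum_list (map (\<lambda>p. count_list p e) Ps))) v"
    by simp
  also have "\<dots> = net (\<lambda>e. int (count_list p e)) v + net (\<lambda>e. int (sum_list (map (\<lambda>p. count_list p e) Ps))) v"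
    by (rule net_add)
  also have "net (\<lambda>e. int (count_list p e)) v = of_bool (v = s) - of_bool (v = t)"
    using Cons.prems net_walk unfolding is_path_def by auto
  finally show ?case using Cons by (simp add: algebra_simps)
qed

definition fB :: "'e \<Rightarrow> nat" where
  "fB e = sum_list (map (\<lambda>p. count_list p e) B)"

lemma fB_pos: "fB e \<ge> 1 \<Longrightarrow> \<exists>i<\<sigma>. e \<in> set (B!i)"
proof -
  assume "fB e \<ge> 1"
  then have "fB e \<noteq> 0" by linarith
  then have "sum_list (map (\<lambda>p. count_list p e) B) \<noteq> 0" unfolding fB_def by assumption
  then obtain p where p: "p \<in> set B" "count_list p e \<noteq> 0" using sum_pos_ex by blast
  then have ep: "e \<in> set p" using count_list_0_iff by metis
  obtain i where "i < length B" "B!i = p" using p(1) in_set_conv_nth by metis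
  then show ?thesis using Blen ep by auto
qed

lemma fB_ge: "p \<in> set B \<Longrightarrow> e \<in> set p \<Longrightarrow> fB e \<ge> 1"
proof -
  assume a: "p \<in> set B" "e \<in> set p"
  have "count_list p e \<le> fB e" unfolding fB_def using a(1) by (rule count_le_sum)
  moreover have "count_list p e \<noteq> 0" using a(2) by (simp add: count_list_0_iff)
  ultimately show ?thesis by simp
qed

lemma fB_le1: "e \<in> N \<Longrightarrow> fB e \<le> 1"
proof -
  assume eN: "e \<in> N"
  have fB: "fB e = (\<Sum>k = 0..<\<sigma>. count_list (B!k) e)"
    unfolding fB_def using Blen by (simp add: sum_list_sum_nth)
  show ?thesis
  proof (cases "\<exists>i<\<sigma>. e \<in> set (B!i)")
    case False
    then have "(\<Sum>k = 0..<\<sigma>. count_list (B!k) e) = 0" by simp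
    then show ?thesis using fB by simp
  next
    case True
    then obtain i where i: "i < \<sigma>" "e \<in> set (B!i)" by auto
    have "\<forall>k\<in>{0..<\<sigma>} - {i}. count_list (B!k) e = 0"
    proof
      fix k assume k: "k \<in> {0..<\<sigma>} - {i}"
      then have "e \<notin> set (B!k)" using Bdisj[of i k] i eN by auto
      then show "count_list (B!k) e = 0" by simp
    qed
    then have "(\<Sum>k = 0..<\<sigma>. count_list (B!k) e) = count_list (B!i) e"
      using i by (subst sum.remove[of _ i]) auto
    moreover have di: "distinct (B!i)" using Bpath[of "B!i"] i Blen
      unfolding is_path_def by (metis distinct_arcs nth_mem)
    ultimately show ?thesis using fB count_distinct[OF di, of e] by simp
  qed
qed

definition res :: "'v \<Rightarrow> 'v \<Rightarrow> bool" where
  "res a b \<longleftrightarrow> (\<exists>e\<in>arcs D. tail D e = a \<and> head D e = b \<and> (e \<notin> N \<or> fB e = 0)) \<or>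
              (\<exists>e\<in>arcs D. head D e = a \<and> tail D e = b \<and> fB e \<ge> 1)"

lemma cut_case:
  assumes "\<not> res\<^sup>*\<^sup>* s t"
  shows "\<exists>C\<subseteq>N. card C \<le> \<sigma> \<and> (\<forall>p. is_path D (arcs D) s t p \<longrightarrow> set p \<inter> C \<noteq> {})"
proof -
  define R where "R = {w. res\<^sup>*\<^sup>* s w}"
  define C where "C = {e\<in>N. tail D e \<in> R \<and> head D e \<notin> R}"
  have sR: "s \<in> R" and tR: "t \<notin> R" using assms unfolding R_def by auto
  have fwd: "head D e \<in> R" if "e \<in> arcs D" "tail D e \<in> R" "e \<notin> N \<or> fB e = 0" for e
  proof -
    have "res (tail D e) (head D e)" using that unfolding res_def by blast
    then show ?thesis using that(2) unfolding R_def by (auto intro: rtranclp.rtrancl_into_rtrancl)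
  qed
  have bwd: "tail D e \<in> R" if "e \<in> arcs D" "head D e \<in> R" "fB e \<ge> 1" for e
  proof -
    have "res (head D e) (tail D e)" using that unfolding res_def by blast
    then show ?thesis using that(2) unfolding R_def by (auto intro: rtranclp.rtrancl_into_rtrancl)
  qed
  have hits: "set p \<inter> C \<noteq> {}" if p: "is_path D (arcs D) s t p" for p
  proof -
    have w: "walk D s p t" "set p \<subseteq> arcs D" using p unfolding is_path_def by auto
    obtain e where e: "e \<in> set p" "tail D e \<in> R" "head D e \<notin> R" using walk_cross[OF w(1) sR tR] by blast
    then have "e \<in> N" using fwd w(2) by blast
    then show ?thesis using e unfolding C_def by blast
  qed
  have Cpos: "\<exists>i<\<sigma>. e \<in> set (B!i)" if "e \<in> C" for e
  proof -
    have "e \<in> arcs D" using that NA unfolding C_def by auto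
    then have "fB e \<noteq> 0" using that fwd unfolding C_def by blast
    then show ?thesis using fB_pos by simp
  qed
  define idx where "idx e = (SOME i. i < \<sigma> \<and> e \<in> set (B!i))" for e
  have idx: "idx e < \<sigma> \<and> e \<in> set (B!idx e)" if "e \<in> C" for e
    unfolding idx_def using someI_ex[OF Cpos[OF that]] by simp
  have "inj_on idx C"
  proof (rule inj_onI)
    fix e1 e2 assume a: "e1 \<in> C" "e2 \<in> C" "idx e1 = idx e2"
    show "e1 = e2"
    proof (rule ccontr)
      assume ne: "e1 \<noteq> e2"
      define P where "P = B ! idx e1"
      have PB: "P \<in> set B" using idx[OF a(1)] Blen unfolding P_def by auto
      have inP: "e1 \<in> set P" "e2 \<in> set P" using idx[OF a(1)] idx[OF a(2)] a(3) unfolding P_def by auto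
      have wP: "walk D s P t" "set P \<subseteq> arcs D" using Bpath[OF PB] unfolding is_path_def by auto
      have cl: "\<forall>e\<in>set M. head D e \<in> R \<longrightarrow> tail D e \<in> R" if "set M \<subseteq> set P" for M
        using that bwd wP(2) fB_ge[OF PB] by blast
      have key: False if "P = L1 @ f1 # M @ f2 # L3" "f1 \<in> C" "f2 \<in> C" for L1 f1 M f2 L3
      proof -
        have "walk D (head D f1) M (tail D f2)" using walk_mid wP(1) that(1) by metis
        moreover have "head D f1 \<notin> R" "tail D f2 \<in> R" using that(2,3) unfolding C_def by auto
        moreover have "set M \<subseteq> set P" using that(1) by auto
        ultimately show False using walk_stay cl by metis
      qed
      obtain L1 L2 where P1: "P = L1 @ e1 # L2" using inP(1) split_list by metis
      then have "e2 \<in> set L1 \<or> e2 \<in> set L2" using inP(2) ne by auto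
      then show False
      proof
        assume "e2 \<in> set L1"
        then obtain M1 M2 where "L1 = M1 @ e2 # M2" using split_list by metis
        then show False using key[of M1 e2 M2 e1 L2] P1 a by simp
      next
        assume "e2 \<in> set L2"
        then obtain M1 M2 where "L2 = M1 @ e2 # M2" using split_list by metis
        then show False using key[of L1 e1 M1 e2 M2] P1 a by simp
      qed
    qed
  qed
  moreover have "idx ` C \<subseteq> {..<\<sigma>}" using idx by auto
  ultimately have "card C \<le> card {..<\<sigma>}" by (intro card_inj_on_le) auto
  moreover have "C \<subseteq> N" unfolding C_def by auto
  ultimately show ?thesis using hits by auto
qed

end


context netw
begin

definition okstep :: "'v \<Rightarrow> 'v \<Rightarrow> 'e \<times> bool \<Rightarrow> bool" where
  "okstep a b ed \<longleftrightarrow>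
     (snd ed \<and> fst ed \<in> arcs D \<and> tail D (fst ed) = a \<and> head D (fst ed) = b \<and> (fst ed \<notin> N \<or> fB (fst ed) = 0)) \<or>
     (\<not> snd ed \<and> fst ed \<in> arcs D \<and> head D (fst ed) = a \<and> tail D (fst ed) = b \<and> fB (fst ed) \<ge> 1)"

definition stp :: "'v \<Rightarrow> 'v \<Rightarrow> 'e \<times> bool" where
  "stp a b = (SOME ed. okstep a b ed)"

lemma stp_ok: "res a b \<Longrightarrow> okstep a b (stp a b)"
proof -
  assume "res a b"
  then have "\<exists>ed. okstep a b ed" unfolding res_def okstep_def
    by (metis fst_conv snd_conv)
  then show ?thesis unfolding stp_def by (rule someI_ex)
qed

lemma cw_supp: "rtrancl_path res a vs c \<Longrightarrow> cw stp a vs e \<noteq> 0 \<Longrightarrow>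
   tail D e \<in> set (a#vs) \<and> head D e \<in> set (a#vs)"
proof (induction rule: rtrancl_path.induct)
  case (base x) then show ?case by simp
next
  case (step x y ys z)
  show ?case
  proof (cases "e = fst (stp x y)")
    case True
    have "okstep x y (stp x y)" using step(1) by (rule stp_ok)
    then show ?thesis using True unfolding okstep_def by auto
  next
    case False
    then have "cw stp y ys e \<noteq> 0" using step.prems by simp
    then show ?thesis using step.IH by auto
  qed
qed

lemma cw_val: "rtrancl_path res a vs c \<Longrightarrow> distinct (a#vs) \<Longrightarrow>
   cw stp a vs e = 0 \<or> (cw stp a vs e = 1 \<and> e \<in> arcs D \<and> (e \<notin> N \<or> fB e = 0)) \<or>
   (cw stp a vs e = -1 \<and> e \<in> arcs D \<and> fB e \<ge> 1)"
proof (induction rule: rtrancl_path.induct)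
  case (base x) then show ?case by simp
next
  case (step x y ys z)
  define e0 where "e0 = fst (stp x y)"
  have ok: "okstep x y (stp x y)" using step(1) by (rule stp_ok)
  have xn: "x \<notin> set (y#ys)" using step.prems by simp
  have z0: "cw stp y ys e0 = 0"
  proof (rule ccontr)
    assume "cw stp y ys e0 \<noteq> 0"
    then have "tail D e0 \<in> set (y#ys) \<and> head D e0 \<in> set (y#ys)" using cw_supp step(2) by blast
    then show False using ok xn unfolding okstep_def e0_def by auto
  qed
  show ?case
  proof (cases "e = e0")
    case True
    then show ?thesis using z0 ok unfolding okstep_def e0_def by auto
  next
    case False
    then have "cw stp x (y#ys) e = cw stp y ys e" unfolding e0_def by simp
    then show ?thesis using step.IH step.prems by simp
  qed
qed

lemma cw_net: "rtrancl_path res a vs c \<Longrightarrow> net (cw stp a vs) v = of_bool (v = a) - of_bool (v = c)"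
proof (induction rule: rtrancl_path.induct)
  case (base x) then show ?case by (simp add: net_zero)
next
  case (step x y ys z)
  define e0 where "e0 = fst (stp x y)"
  define c where "c = (if snd (stp x y) then 1 else -1 :: int)"
  have ok: "okstep x y (stp x y)" using step(1) by (rule stp_ok)
  have e0: "e0 \<in> arcs D" using ok unfolding okstep_def e0_def by auto
  have "cw stp x (y#ys) = (\<lambda>e. (if e = e0 then c else 0) + cw stp y ys e)"
    unfolding e0_def c_def by auto
  then have "net (cw stp x (y#ys)) v = net (\<lambda>e. if e = e0 then c else 0) v + net (cw stp y ys) v"
    using net_add by simp
  also have "net (\<lambda>e. if e = e0 then c else 0) v = (if tail D e0 = v then c else 0) - (if head D e0 = v then c else 0)"
    by (rule net_ind[OF e0])
  also have "\<dots> = of_bool (v = x) - of_bool (v = y)"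
    using ok unfolding okstep_def e0_def c_def by auto
  finally show ?case using step.IH by simp
qed

lemma pos_path:
  fixes g :: "'e \<Rightarrow> int"
  assumes nn: "\<forall>e\<in>arcs D. g e \<ge> 0"
    and nt: "\<forall>v. net g v = int m * (of_bool (v = s) - of_bool (v = t))"
    and m: "m > 0"
  shows "\<exists>P. is_path D (arcs D) s t P \<and> (\<forall>e\<in>set P. g e \<ge> 1)"
proof -
  define A1 where "A1 = {e\<in>arcs D. g e \<ge> 1}"
  define Rg where "Rg = {w. (arel D A1)\<^sup>*\<^sup>* s w}"
  have "t \<in> Rg"
  proof (rule ccontr)
    assume tR: "t \<notin> Rg"
    define V' where "V' = Rg \<inter> verts D"
    have fV': "finite V'" using finV unfolding V'_def by auto
    have sV': "s \<in> V'" using sV unfolding V'_def Rg_def by auto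
    have tV': "t \<notin> V'" using tR unfolding V'_def by auto
    have "(\<Sum>v\<in>V'. net g v) = (\<Sum>v\<in>V'. int m * (of_bool (v = s) - of_bool (v = t)))"
      using nt by simp
    also have "\<dots> = (\<Sum>v\<in>V'. int m * of_bool (v = s))"
      using tV' by (intro sum.cong) auto
    also have "\<dots> = (\<Sum>v\<in>V'. if v = s then int m else 0)" by (intro sum.cong) auto
    also have "\<dots> = int m" using sV' fV' by simp
    finally have lhs: "(\<Sum>v\<in>V'. net g v) = int m" .
    define X where "X = {e\<in>arcs D. tail D e \<in> V'}"
    define Y where "Y = {e\<in>arcs D. head D e \<in> V'}"
    have fX: "finite X" "finite Y" using finA unfolding X_def Y_def by auto
    have gX: "(\<Sum>v\<in>V'. \<Sum>e\<in>{e\<in>arcs D. tail D e = v}. g e) = sum g X"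
    proof -
      have "(\<Sum>v\<in>V'. \<Sum>e\<in>{e\<in>arcs D. tail D e = v}. g e) = (\<Sum>v\<in>V'. sum g {e\<in>X. tail D e = v})"
        unfolding X_def by (intro sum.cong) auto
      also have "\<dots> = sum g X" by (rule sum.group[OF fX(1) fV']) (auto simp: X_def)
      finally show ?thesis .
    qed
    have gY: "(\<Sum>v\<in>V'. \<Sum>e\<in>{e\<in>arcs D. head D e = v}. g e) = sum g Y"
    proof -
      have "(\<Sum>v\<in>V'. \<Sum>e\<in>{e\<in>arcs D. head D e = v}. g e) = (\<Sum>v\<in>V'. sum g {e\<in>Y. head D e = v})"
        unfolding Y_def by (intro sum.cong) auto
      also have "\<dots> = sum g Y" by (rule sum.group[OF fX(2) fV']) (auto simp: Y_def)
      finally show ?thesis .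
    qed
    have "(\<Sum>v\<in>V'. net g v) = sum g X - sum g Y"
      unfolding net_def using gX gY by (simp add: sum_subtractf)
    moreover have "sum g X \<le> sum g Y"
    proof -
      have z: "g e = 0" if "e \<in> X" "e \<notin> Y" for e
      proof (rule ccontr)
        assume "g e \<noteq> 0"
        moreover have "g e \<ge> 0" using nn that(1) unfolding X_def by blast
        ultimately have "g e \<ge> 1" by linarith
        then have "e \<in> A1" using that(1) unfolding A1_def X_def by auto
        then have "arel D A1 (tail D e) (head D e)" unfolding arel_def by auto
        moreover have "tail D e \<in> Rg" using that(1) unfolding X_def V'_def by auto
        ultimately have "(arel D A1)\<^sup>*\<^sup>* s (head D e)" unfolding Rg_def
          using rtranclp.rtrancl_into_rtrancl[of "arel D A1" s "tail D e" "head D e"] by simp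
        then have "head D e \<in> Rg" unfolding Rg_def by simp
        moreover have "head D e \<in> verts D" using ends that(1) unfolding X_def by auto
        ultimately show False using that unfolding Y_def V'_def X_def by auto
      qed
      have "sum g X = (\<Sum>e\<in>X. if e \<in> Y then g e else 0)" using z by (intro sum.cong) auto
      also have "\<dots> = sum g (X \<inter> Y)" using fX by (simp add: sum.inter_restrict)
      also have "\<dots> \<le> sum g Y" using fX nn by (intro sum_mono2) (auto simp: Y_def)
      finally show ?thesis .
    qed
    ultimately show False using lhs m by simp
  qed
  then have "(arel D A1)\<^sup>*\<^sup>* s t" unfolding Rg_def by simp
  then obtain vs where vs: "rtrancl_path (arel D A1) s vs t"
    unfolding rtranclp_eq_rtrancl_path by blast
  obtain L where L: "walk D s L t" "set L \<subseteq> A1" using rtp_walk[OF vs] by blast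
  obtain L' where L': "walk D s L' t" "set L' \<subseteq> set L" "distinct (s # map (head D) L')"
    using walk_to_path[OF L(1)] by blast
  have "L' \<noteq> []" using L'(1) st by (cases L') auto
  then have "is_path D (arcs D) s t L'" using L' L(2) unfolding is_path_def A1_def by auto
  moreover have "\<forall>e\<in>set L'. g e \<ge> 1" using L'(2) L(2) unfolding A1_def by auto
  ultimately show ?thesis by blast
qed

lemma decomp:
  fixes g :: "'e \<Rightarrow> int"
  assumes "\<forall>e\<in>arcs D. g e \<ge> 0"
    and "\<forall>v. net g v = int m * (of_bool (v = s) - of_bool (v = t))"
  shows "\<exists>Ps. length Ps = m \<and> (\<forall>p\<in>set Ps. is_path D (arcs D) s t p) \<and>
     (\<forall>e\<in>arcs D. int (sum_list (map (\<lambda>p. count_list p e) Ps)) \<le> g e)"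
  using assms
proof (induction m arbitrary: g)
  case 0 then show ?case by (intro exI[of _ "[]"]) auto
next
  case (Suc m)
  obtain P where P: "is_path D (arcs D) s t P" "\<forall>e\<in>set P. g e \<ge> 1"
    using pos_path[OF Suc.prems] by auto
  have "distinct (s # map (head D) P)" using P(1) unfolding is_path_def by auto
  then have dP: "distinct P" by (rule distinct_arcs)
  define g' where "g' e = g e - int (count_list P e)" for e
  have nn': "\<forall>e\<in>arcs D. g' e \<ge> 0"
  proof
    fix e assume "e \<in> arcs D"
    then show "g' e \<ge> 0" using Suc.prems(1) P(2) count_distinct[OF dP, of e] unfolding g'_def
      by (cases "e \<in> set P") auto
  qed
  have nt': "\<forall>v. net g' v = int m * (of_bool (v = s) - of_bool (v = t))"
  proof
    fix v
    have "net g' v = net g v - net (\<lambda>e. int (count_list P e)) v"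
      unfolding g'_def by (rule net_diff)
    also have "net (\<lambda>e. int (count_list P e)) v = of_bool (v = s) - of_bool (v = t)"
      using P(1) net_walk unfolding is_path_def by auto
    finally show "net g' v = int m * (of_bool (v = s) - of_bool (v = t))"
      using Suc.prems(2) by (simp add: algebra_simps)
  qed
  obtain Ps where Ps: "length Ps = m" "\<forall>p\<in>set Ps. is_path D (arcs D) s t p"
    "\<forall>e\<in>arcs D. int (sum_list (map (\<lambda>p. count_list p e) Ps)) \<le> g' e"
    using Suc.IH[OF nn' nt'] by blast
  have "\<forall>e\<in>arcs D. int (sum_list (map (\<lambda>p. count_list p e) (P # Ps))) \<le> g e"
  proof
    fix e assume "e \<in> arcs D"
    then have "int (sum_list (map (\<lambda>p. count_list p e) Ps)) \<le> g' e" using Ps(3) by blast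
    then show "int (sum_list (map (\<lambda>p. count_list p e) (P # Ps))) \<le> g e" unfolding g'_def by simp
  qed
  then show ?case using Ps P(1) by (intro exI[of _ "P # Ps"]) auto
qed

theorem mincut: "\<exists>C\<subseteq>N. card C \<le> \<sigma> \<and> (\<forall>p. is_path D (arcs D) s t p \<longrightarrow> set p \<inter> C \<noteq> {})"
proof (cases "res\<^sup>*\<^sup>* s t")
  case False then show ?thesis by (rule cut_case)
next
  case True
  then obtain vs0 where "rtrancl_path res s vs0 t" unfolding rtranclp_eq_rtrancl_path by blast
  then obtain vs where vs: "rtrancl_path res s vs t" "distinct (s # vs)" by (rule rtrancl_path_distinct)
  define g where "g e = int (fB e) + cw stp s vs e" for e
  have gnn: "\<forall>e\<in>arcs D. g e \<ge> 0"
  proof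
    fix e assume "e \<in> arcs D"
    show "g e \<ge> 0" using cw_val[OF vs, of e] unfolding g_def by auto
  qed
  have g1: "g e \<le> 1" if "e \<in> N" for e
    using cw_val[OF vs, of e] fB_le1[OF that] that unfolding g_def by auto
  have gnt: "\<forall>v. net g v = int (\<sigma> + 1) * (of_bool (v = s) - of_bool (v = t))"
  proof
    fix v
    have "net g v = net (\<lambda>e. int (sum_list (map (\<lambda>p. count_list p e) B))) v + net (cw stp s vs) v"
      unfolding g_def fB_def by (rule net_add)
    also have "net (\<lambda>e. int (sum_list (map (\<lambda>p. count_list p e) B))) v =
        int (length B) * (of_bool (v = s) - of_bool (v = t))"
      using net_fam Bpath by blast
    also have "net (cw stp s vs) v = of_bool (v = s) - of_bool (v = t)" by (rule cw_net[OF vs(1)])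
    finally show "net g v = int (\<sigma> + 1) * (of_bool (v = s) - of_bool (v = t))"
      using Blen by (simp add: algebra_simps)
  qed
  obtain Ps where Ps: "length Ps = \<sigma> + 1" "\<forall>p\<in>set Ps. is_path D (arcs D) s t p"
     "\<forall>e\<in>arcs D. int (sum_list (map (\<lambda>p. count_list p e) Ps)) \<le> g e"
    using decomp[OF gnn gnt] by blast
  have "Ndisj_family D N Ps"
    unfolding Ndisj_family_def
  proof (intro conjI allI impI)
    show "\<forall>p\<in>set Ps. is_path D (arcs D) s t p" by (rule Ps(2))
    fix i j assume ij: "i < length Ps" "j < length Ps" "i \<noteq> j"
    show "set (Ps!i) \<inter> set (Ps!j) \<inter> N = {}"
    proof (rule ccontr)
      assume "set (Ps!i) \<inter> set (Ps!j) \<inter> N \<noteq> {}"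
      then obtain e where e: "e \<in> set (Ps!i)" "e \<in> set (Ps!j)" "e \<in> N" by auto
      have "count_list (Ps!i) e + count_list (Ps!j) e \<le> sum_list (map (\<lambda>p. count_list p e) Ps)"
        using sum_list_two[OF ij, of "\<lambda>p. count_list p e"] by simp
      moreover have "count_list (Ps!i) e \<noteq> 0" "count_list (Ps!j) e \<noteq> 0"
        using e(1,2) by (simp_all add: count_list_0_iff)
      moreover have "e \<in> arcs D" using e(3) NA by blast
      then have "int (sum_list (map (\<lambda>p. count_list p e) Ps)) \<le> g e" using Ps(3) by blast
      moreover have "g e \<le> 1" by (rule g1[OF e(3)])
      ultimately show False by linarith
    qed
  qed
  then have "length Ps \<le> \<sigma>" by (rule sigma_ge)
  then show ?thesis using Ps(1) by simp
qed

end


definition lenx :: "'e set \<Rightarrow> ('e \<Rightarrow> real) \<Rightarrow> 'e list \<Rightarrow> real" where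
  "lenx N x L = sum_list (map (\<lambda>e. if e \<in> N then x e else 0) L)"

lemma lenx_append: "lenx N x (L1 @ L2) = lenx N x L1 + lenx N x L2"
  unfolding lenx_def by simp

lemma lenx_distinct: "distinct L \<Longrightarrow> lenx N x L = sum x (set L \<inter> N)"
proof -
  assume "distinct L"
  then have "lenx N x L = (\<Sum>e\<in>set L. if e \<in> N then x e else 0)"
    unfolding lenx_def by (simp add: sum_list_distinct_conv_sum_set)
  also have "\<dots> = sum x (set L \<inter> N)" by (simp add: sum.inter_restrict)
  finally show ?thesis .
qed

lemma lenx_ge: "\<forall>e\<in>N. x e \<ge> 0 \<Longrightarrow> sum x (set L \<inter> N) \<le> lenx N x L"
proof -
  assume nn: "\<forall>e\<in>N. x e \<ge> 0"
  have "(\<Sum>e\<in>set L. if e \<in> N then x e else 0) \<le> lenx N x L"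
    unfolding lenx_def by (rule sum_list_ge_sum_set) (use nn in auto)
  moreover have "(\<Sum>e\<in>set L. if e \<in> N then x e else 0) = sum x (set L \<inter> N)"
    by (simp add: sum.inter_restrict)
  ultimately show ?thesis by simp
qed

lemma lenx_nonneg: "\<forall>e\<in>N. x e \<ge> 0 \<Longrightarrow> lenx N x L \<ge> 0"
  unfolding lenx_def by (intro sum_list_nonneg) auto

lemma lenx_elem: "\<forall>e\<in>N. x e \<ge> 0 \<Longrightarrow> e \<in> set L \<Longrightarrow> e \<in> N \<Longrightarrow> x e \<le> lenx N x L"
proof -
  assume a: "\<forall>e\<in>N. x e \<ge> 0" "e \<in> set L" "e \<in> N"
  have "(\<lambda>e. if e \<in> N then x e else 0) e \<le> lenx N x L"
    unfolding lenx_def by (rule sum_list_ge_elem) (use a in auto)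
  then show ?thesis using a by simp
qed

context netw
begin

lemma Nne: "\<exists>n0. n0 \<in> N"
proof -
  have "B!0 \<in> set B" using sig2 Blen by auto
  then have "set (B!0) \<inter> N \<noteq> {}" using Bpath hitN by blast
  then show ?thesis by blast
qed

lemma N_fixed: "N \<in> fixset N (chi D N)"
  unfolding fixset_def chi_def by auto

lemma witness: "\<exists>y. lp_feasible D N (chi D N) y 0"
proof -
  obtain C where C: "C \<subseteq> N" "card C \<le> \<sigma>" "\<forall>p. is_path D (arcs D) s t p \<longrightarrow> set p \<inter> C \<noteq> {}"
    using mincut by blast
  obtain n0 where n0: "n0 \<in> N" using Nne by blast
  have fC: "finite C" using C(1) finN finite_subset by blast
  define y where "y e = (if e \<in> C then 1 else 0) + (if e = n0 then real \<sigma> - real (card C) else 0)" for e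
  have ynn: "y e \<ge> (if e \<in> C then 1 else 0)" for e
    using C(2) unfolding y_def by auto
  have "(\<Sum>e\<in>N. if e \<in> C then 1 else (0::real)) = real (card (N \<inter> C))"
    using finN by (simp add: sum.inter_restrict[symmetric])
  moreover have "N \<inter> C = C" using C(1) by auto
  moreover have "(\<Sum>e\<in>N. if e = n0 then real \<sigma> - real (card C) else 0) = real \<sigma> - real (card C)"
    using finN n0 by simp
  ultimately have "sum y N = real \<sigma>" unfolding y_def by (simp add: sum.distrib)
  moreover have "\<forall>e. e \<notin> N \<longrightarrow> y e = 0" using C(1) n0 unfolding y_def by auto
  moreover have "\<forall>e\<in>N. y e \<ge> 0" using C(2) unfolding y_def by auto
  ultimately have ychi: "y \<in> chi D N" unfolding chi_def by auto
  have "sum y S \<ge> (1 + 0) * gt D N S" if S: "S \<subseteq> N" "S \<notin> fixset N (chi D N)" for S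
  proof -
    have SN: "S \<noteq> N" using S(2) N_fixed by auto
    have fS: "finite S" using S(1) finN finite_subset by blast
    have "gamma D N S \<le> card (C \<inter> S)"
    proof (rule gamma_le)
      fix Ps assume Ps: "disj_family D (S \<union> (arcs D - N)) Ps"
      show "length Ps \<le> card (C \<inter> S)"
      proof (rule len_le_card)
        show "finite (C \<inter> S)" using fC by simp
        show "\<forall>i<length Ps. set (Ps!i) \<inter> (C \<inter> S) \<noteq> {}"
        proof (intro allI impI)
          fix i assume i: "i < length Ps"
          then have p: "is_path D (S \<union> (arcs D - N)) s t (Ps!i)" using Ps unfolding disj_family_def by auto
          have "S \<union> (arcs D - N) \<subseteq> arcs D" using S(1) NA by auto
          then have "is_path D (arcs D) s t (Ps!i)" by (rule is_path_mono[OF p])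
          then obtain e where e: "e \<in> set (Ps!i)" "e \<in> C" using C(3) by blast
          have "e \<in> S" using e p C(1) unfolding is_path_def by auto
          then show "set (Ps!i) \<inter> (C \<inter> S) \<noteq> {}" using e by blast
        qed
        show "\<forall>i<length Ps. \<forall>j<length Ps. i \<noteq> j \<longrightarrow> set (Ps!i) \<inter> set (Ps!j) \<inter> (C \<inter> S) = {}"
          using Ps unfolding disj_family_def by blast
      qed
    qed
    then have "gt D N S \<le> real (card (C \<inter> S))" unfolding gt_def using SN by simp
    also have "real (card (C \<inter> S)) = (\<Sum>e\<in>S. if e \<in> C then 1 else 0)"
      using fS by (simp add: sum.inter_restrict[symmetric] Int_commute)
    also have "\<dots> \<le> sum y S" using ynn by (intro sum_mono) auto
    finally show ?thesis by simp
  qed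
  then show ?thesis unfolding lp_feasible_def using ychi by blast
qed

lemma Xseq_mono: "Xseq D N (Suc k) \<subseteq> Xseq D N k"
proof
  fix x assume "x \<in> Xseq D N (Suc k)"
  then obtain \<epsilon> where "lp_feasible D N (Xseq D N k) x \<epsilon>" by auto
  then show "x \<in> Xseq D N k" unfolding lp_feasible_def by blast
qed

lemma Xseq_sub1: "k \<ge> 1 \<Longrightarrow> Xseq D N k \<subseteq> Xseq D N 1"
proof (induction k)
  case 0 then show ?case by simp
next
  case (Suc k)
  then show ?case using Xseq_mono[of k] by (cases "k = 0") auto
qed

lemma X1_prop: "x \<in> Xseq D N 1 \<Longrightarrow> x \<in> chi D N \<and> (\<forall>S. S \<subseteq> N \<and> S \<notin> fixset N (chi D N) \<longrightarrow> sum x S \<ge> gt D N S)"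
proof -
  assume "x \<in> Xseq D N 1"
  then obtain \<epsilon> where e: "lp_feasible D N (chi D N) x \<epsilon>" "\<forall>y \<delta>. lp_feasible D N (chi D N) y \<delta> \<longrightarrow> \<delta> \<le> \<epsilon>"
    by auto
  obtain y where "lp_feasible D N (chi D N) y 0" using witness by blast
  then have e0: "0 \<le> \<epsilon>" using e(2) by blast
  have "sum x S \<ge> gt D N S" if "S \<subseteq> N" "S \<notin> fixset N (chi D N)" for S
  proof -
    have "sum x S \<ge> (1 + \<epsilon>) * gt D N S" using e(1) that unfolding lp_feasible_def by blast
    moreover have "gt D N S \<ge> 0" unfolding gt_def by simp
    moreover have "\<epsilon> * gt D N S \<ge> 0" using e0 \<open>gt D N S \<ge> 0\<close> by (rule mult_nonneg_nonneg)
    moreover have "(1 + \<epsilon>) * gt D N S = gt D N S + \<epsilon> * gt D N S" by (simp add: algebra_simps)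
    ultimately show ?thesis by linarith
  qed
  moreover have "x \<in> chi D N" using e(1) unfolding lp_feasible_def by blast
  ultimately show ?thesis by blast
qed

lemma nonfixed: "S \<subseteq> N \<Longrightarrow> S \<noteq> {} \<Longrightarrow> S \<noteq> N \<Longrightarrow> S \<notin> fixset N (chi D N)"
proof
  assume S: "S \<subseteq> N" "S \<noteq> {}" "S \<noteq> N" and fx: "S \<in> fixset N (chi D N)"
  obtain a where a: "a \<in> S" using S(2) by blast
  obtain b where b: "b \<in> N" "b \<notin> S" using S(1,3) by blast
  have fS: "finite S" using S(1) finN finite_subset by blast
  define y1 where "y1 e = (if e = a then real \<sigma> else 0)" for e
  define y2 where "y2 e = (if e = b then real \<sigma> else 0)" for e
  have "y1 \<in> chi D N" "y2 \<in> chi D N" using a b S(1) finN unfolding chi_def y1_def y2_def by auto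
  moreover obtain c where "\<forall>x\<in>chi D N. sum x S = c" using fx unfolding fixset_def by auto
  ultimately have "sum y1 S = sum y2 S" by simp
  moreover have "sum y1 S = real \<sigma>" using a fS unfolding y1_def by simp
  moreover have "sum y2 S = 0" using b fS unfolding y2_def by simp
  ultimately show False using sig2 by simp
qed

definition good :: "('e \<Rightarrow> real) \<Rightarrow> bool" where
  "good x \<longleftrightarrow> x \<in> chi D N \<and> (\<forall>W. is_path D (arcs D) s t W \<longrightarrow> sum x (set W \<inter> N) \<ge> 1)"

lemma X1_good: "x \<in> Xseq D N 1 \<Longrightarrow> good x"
proof -
  assume x1: "x \<in> Xseq D N 1"
  note X = X1_prop[OF x1]
  have "sum x (set W \<inter> N) \<ge> 1" if W: "is_path D (arcs D) s t W" for W
  proof (cases "set W \<inter> N = N")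
    case True
    then have "sum x (set W \<inter> N) = real \<sigma>" using X unfolding chi_def by simp
    then show ?thesis using sig2 by simp
  next
    case False
    have ne: "set W \<inter> N \<noteq> {}" using hitN W by blast
    then have "set W \<inter> N \<notin> fixset N (chi D N)" using False by (intro nonfixed) auto
    then have "sum x (set W \<inter> N) \<ge> gt D N (set W \<inter> N)" using X by blast
    moreover have "gt D N (set W \<inter> N) = real (gamma D N (set W \<inter> N))" using False unfolding gt_def by simp
    moreover have "1 \<le> gamma D N (set W \<inter> N)"
    proof -
      have "is_path D ((set W \<inter> N) \<union> (arcs D - N)) s t W"
        using W unfolding is_path_def by auto
      then have "disj_family D ((set W \<inter> N) \<union> (arcs D - N)) [W]" by (rule disj_family_single)
      then have "length [W] \<le> gamma D N (set W \<inter> N)" using NA by (intro gamma_ge) auto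
      then show ?thesis by simp
    qed
    ultimately show ?thesis by linarith
  qed
  then show ?thesis unfolding good_def using X by blast
qed

lemma good_chi: "good x \<Longrightarrow> (\<forall>e\<in>N. x e \<ge> 0) \<and> sum x N = real \<sigma> \<and> (\<forall>e. e \<notin> N \<longrightarrow> x e = 0)"
  unfolding good_def chi_def by auto

lemma good_B:
  assumes g: "good x"
  shows "\<forall>i<\<sigma>. sum x (set (B!i) \<inter> N) = 1"
    and "\<forall>e\<in>N. (\<forall>p\<in>set B. e \<notin> set p) \<longrightarrow> x e = 0"
proof -
  note gc = good_chi[OF g]
  define a where "a i = sum x (set (B!i) \<inter> N)" for i
  define U where "U = (\<Union>i\<in>{..<\<sigma>}. set (B!i) \<inter> N)"
  have a1: "a i \<ge> 1" if "i < \<sigma>" for i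
    using g Bpath[of "B!i"] that Blen unfolding good_def a_def by auto
  have "sum x U = (\<Sum>i\<in>{..<\<sigma>}. a i)"
    unfolding U_def a_def
  proof (rule sum.UNION_disjoint)
    show "finite {..<\<sigma>}" by simp
    show "\<forall>i\<in>{..<\<sigma>}. finite (set (B!i) \<inter> N)" by simp
    show "\<forall>i\<in>{..<\<sigma>}. \<forall>j\<in>{..<\<sigma>}. i \<noteq> j \<longrightarrow> (set (B!i) \<inter> N) \<inter> (set (B!j) \<inter> N) = {}"
    proof (intro ballI impI)
      fix i j assume "i \<in> {..<\<sigma>}" "j \<in> {..<\<sigma>}" "i \<noteq> j"
      then have "set (B!i) \<inter> set (B!j) \<inter> N = {}" using Bdisj by simp
      then show "(set (B!i) \<inter> N) \<inter> (set (B!j) \<inter> N) = {}" by auto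
    qed
  qed
  moreover have UN: "U \<subseteq> N" unfolding U_def by auto
  have split: "sum x N = sum x U + sum x (N - U)"
    using UN finN by (metis add.commute sum.subset_diff)
  have "sum x (N - U) \<ge> 0" using gc by (intro sum_nonneg) auto
  ultimately have le: "(\<Sum>i\<in>{..<\<sigma>}. a i) \<le> real \<sigma>" using gc split by linarith
  have z: "(\<Sum>i\<in>{..<\<sigma>}. a i - 1) \<le> 0" using le by (simp add: sum_subtractf)
  have "\<forall>i\<in>{..<\<sigma>}. a i - 1 \<ge> 0" using a1 by auto
  then have "(\<Sum>i\<in>{..<\<sigma>}. a i - 1) \<ge> 0" by (intro sum_nonneg) auto
  then have z2: "(\<Sum>i\<in>{..<\<sigma>}. a i - 1) = 0" using z by linarith
  have "\<forall>i\<in>{..<\<sigma>}. a i - 1 = 0"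
    using z2 a1 by (subst sum_nonneg_eq_0_iff[symmetric]) auto
  then show "\<forall>i<\<sigma>. sum x (set (B!i) \<inter> N) = 1" unfolding a_def by auto
  then have "(\<Sum>i\<in>{..<\<sigma>}. a i) = real \<sigma>" unfolding a_def by simp
  then have "sum x (N - U) = 0" using gc split \<open>sum x U = (\<Sum>i\<in>{..<\<sigma>}. a i)\<close> by linarith
  then have "\<forall>e\<in>N - U. x e = 0" using gc finN by (subst sum_nonneg_eq_0_iff[symmetric]) auto
  moreover have "e \<in> N - U" if "e \<in> N" "\<forall>p\<in>set B. e \<notin> set p" for e
    using that Blen unfolding U_def by auto
  ultimately show "\<forall>e\<in>N. (\<forall>p\<in>set B. e \<notin> set p) \<longrightarrow> x e = 0" by blast
qed

lemma good_lenB: "good x \<Longrightarrow> P \<in> set B \<Longrightarrow> lenx N x P = 1"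
proof -
  assume g: "good x" and P: "P \<in> set B"
  obtain i where i0: "i < length B" "B!i = P" using P by (auto simp: in_set_conv_nth)
  then have i: "i < \<sigma>" "B!i = P" using Blen by auto
  have "distinct (s # map (head D) P)" using Bpath[OF P] unfolding is_path_def by auto
  then have "distinct P" by (rule distinct_arcs)
  then have "lenx N x P = sum x (set P \<inter> N)" by (rule lenx_distinct)
  then show ?thesis using good_B(1)[OF g] i by auto
qed

lemma good_phi:
  assumes g: "good x" and P: "P \<in> set B" and PP: "P = P1 @ P2"
    and w1: "walk D s P1 w" and w2: "walk D w P2 t"
  shows "phi D N x w = lenx N x P1"
proof -
  note gc = good_chi[OF g]
  have pP: "is_path D (arcs D) s t P" by (rule Bpath[OF P])
  have dP: "distinct (s # map (head D) P)" using pP unfolding is_path_def by auto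
  have "lenx N x P = lenx N x P1 + lenx N x P2" using PP lenx_append by simp
  then have lP: "lenx N x P1 + lenx N x P2 = 1" using good_lenB[OF g P] by simp
  show ?thesis
  proof (cases "w = s")
    case True
    have "P1 = []"
    proof (rule ccontr)
      assume ne: "P1 \<noteq> []"
      then have "w = last (map (head D) P1)" using walk_Nil_end[OF w1] by simp
      moreover have "last (map (head D) P1) \<in> set (map (head D) P1)" using ne by (intro last_in_set) simp
      ultimately have "w \<in> set (map (head D) P1)" by simp
      then have "s \<in> set (map (head D) P)" using True PP by auto
      then show False using dP by simp
    qed
    then show ?thesis using True unfolding phi_def lenx_def by simp
  next
    case False
    have ne: "P1 \<noteq> []" using False w1 by (cases P1) auto
    have "distinct (s # map (head D) P1)" using dP PP by simp
    moreover have "set P1 \<subseteq> arcs D" using pP PP unfolding is_path_def by auto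
    ultimately have pP1: "is_path D (arcs D) s w P1" using ne w1 unfolding is_path_def by auto
    have lb: "lenx N x P1 \<le> lenx N x p" if p: "is_path D (arcs D) s w p" for p
    proof -
      have "walk D s p w" using p unfolding is_path_def by auto
      then have wp: "walk D s (p @ P2) t" unfolding walk_append using w2 by blast
      obtain W where W: "walk D s W t" "set W \<subseteq> set (p @ P2)" "distinct (s # map (head D) W)"
        by (rule walk_to_path[OF wp])
      have "W \<noteq> []" using W(1) st by (cases W) auto
      moreover have "set (p @ P2) \<subseteq> arcs D" using p pP PP unfolding is_path_def by auto
      ultimately have "is_path D (arcs D) s t W" using W unfolding is_path_def by auto
      then have "sum x (set W \<inter> N) \<ge> 1" using g unfolding good_def by blast
      moreover have "sum x (set W \<inter> N) \<le> sum x (set (p @ P2) \<inter> N)"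
        using W(2) gc by (intro sum_mono2) auto
      moreover have "sum x (set (p @ P2) \<inter> N) \<le> lenx N x (p @ P2)" using lenx_ge[of N x "p @ P2"] gc by blast
      ultimately show ?thesis using lP lenx_append[of N x p P2] by linarith
    qed
    have "phi D N x w = Inf {lenx N x p | p. is_path D (arcs D) s w p}"
      using False unfolding phi_def lenx_def by simp
    also have "\<dots> = lenx N x P1"
    proof (rule cInf_eq_minimum)
      show "lenx N x P1 \<in> {lenx N x p | p. is_path D (arcs D) s w p}" using pP1 by blast
      fix y assume "y \<in> {lenx N x p | p. is_path D (arcs D) s w p}"
      then obtain p where "y = lenx N x p" "is_path D (arcs D) s w p" by blast
      then show "lenx N x P1 \<le> y" using lb by simp
    qed
    finally show ?thesis .
  qed
qed

lemma Barc_onB: "p \<in> set B \<Longrightarrow> e \<in> set p \<Longrightarrow> on_B D B (tail D e) \<and> on_B D B (head D e)"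
proof -
  assume a: "p \<in> set B" "e \<in> set p"
  have "walk D s p t" using Bpath[OF a(1)] unfolding is_path_def by auto
  then have "tail D e \<in> set (s # map (head D) p) \<and> head D e \<in> set (map (head D) p)"
    using walk_mem a(2) by metis
  then show ?thesis using a(1) unfolding on_B_def by auto
qed

lemma jump_notB: "is_jump D B a b Q \<Longrightarrow> e \<in> set Q \<Longrightarrow> \<forall>p\<in>set B. e \<notin> set p"
proof (intro ballI notI)
  fix p assume J: "is_jump D B a b Q" and eQ: "e \<in> set Q" and pB: "p \<in> set B" and ep: "e \<in> set p"
  have oB: "on_B D B (tail D e)" "on_B D B (head D e)" using Barc_onB[OF pB ep] by auto
  have wQ: "walk D a Q b" using J unfolding is_jump_def is_path_def by auto
  have nB: "\<not> on_B D B z" if "z \<in> set (butlast (map (head D) Q))" for z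
    using J that unfolding is_jump_def by blast
  obtain L1 L2 where Q: "Q = L1 @ e # L2" using eQ split_list by metis
  show False
  proof (cases "L2 = []")
    case False
    have "butlast (map (head D) Q) = map (head D) L1 @ head D e # butlast (map (head D) L2)"
      using Q False by (simp add: butlast_append)
    then show False using nB oB by auto
  next
    case L2: True
    show False
    proof (cases "L1 = []")
      case True
      then have "Q = [e]" using Q L2 by simp
      then show False using J pB ep unfolding is_jump_def by blast
    next
      case False
      obtain m where m: "walk D a L1 m" "walk D m [e] b" using wQ Q L2 walk_append by metis
      have "m = last (map (head D) L1)" using walk_Nil_end m(1) False by metis
      moreover have "last (map (head D) L1) \<in> set (map (head D) L1)" using False by (intro last_in_set) simp
      ultimately have "tail D e \<in> set (map (head D) L1)" using m(2) by simp
      moreover have "butlast (map (head D) Q) = map (head D) L1" using Q L2 by simp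
      ultimately show False using nB oB by auto
    qed
  qed
qed

lemma B_in_Ek: "p \<in> set B \<Longrightarrow> e \<in> set p \<Longrightarrow> e \<in> Ek D N B k"
proof -
  assume a: "p \<in> set B" "e \<in> set p"
  have "e \<in> arcs D" using Bpath[OF a(1)] a(2) unfolding is_path_def by auto
  moreover have "e \<notin> \<Union>{set Q | Q u v. is_jump D B u v Q \<and> (u,v) \<notin> Jk D N B k}"
  proof
    assume "e \<in> \<Union>{set Q | Q u v. is_jump D B u v Q \<and> (u,v) \<notin> Jk D N B k}"
    then obtain Q u v where "is_jump D B u v Q" "e \<in> set Q" by auto
    then have "\<forall>p\<in>set B. e \<notin> set p" by (rule jump_notB)
    then show False using a by blast
  qed
  ultimately show ?thesis unfolding Ek_def by blast
qed

lemma re_le: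
  assumes g: "good x" and T: "T \<subseteq> N" and sx: "sum x T \<le> 1 + d"
    and gm: "T \<noteq> N \<Longrightarrow> gamma D N T \<ge> 1"
  shows "re D N x T \<le> ereal d"
proof -
  note gc = good_chi[OF g]
  have xT: "sum x T \<ge> 0" using gc T by (intro sum_nonneg) auto
  show ?thesis
  proof (cases "T = N")
    case True
    then have "gt D N T = real \<sigma>" unfolding gt_def by simp
    moreover have "sum x T = real \<sigma>" using True gc by simp
    ultimately show ?thesis using sig2 sx unfolding re_def by auto
  next
    case False
    define g' where "g' = real (gamma D N T)"
    have g1: "g' \<ge> 1" using gm[OF False] unfolding g'_def by simp
    have gt: "gt D N T = g'" using False unfolding gt_def g'_def by simp
    have "(1 + d) * g' - (1 + d) = (1 + d) * (g' - 1)" by (simp add: algebra_simps)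
    moreover have "(1 + d) * (g' - 1) \<ge> 0" using g1 sx xT by (intro mult_nonneg_nonneg) auto
    ultimately have "sum x T - g' \<le> d * g'" using sx by (simp add: algebra_simps)
    then have "(sum x T - g') / g' \<le> d" using g1 by (simp add: pos_divide_le_eq)
    then show ?thesis using g1 gt unfolding re_def by simp
  qed
qed

end


lemma lenx_zero: "\<forall>e\<in>set L. e \<in> N \<longrightarrow> x e = 0 \<Longrightarrow> lenx N x L = 0"
  unfolding lenx_def by (induction L) auto

context netw
begin

lemma main:
  assumes k1: "k \<ge> 1" and xk: "x \<in> Xseq D N k" and uv: "(u, v) \<in> Jpairs D B - Jk D N B k"
  shows "min (INF Oe\<in>(\<Union>e\<in>N - Nk D N k. Ofam D N B k e). re D N x Oe)
             (INF Rs\<in>(\<Union>(u',v')\<in>Jpairs D B - Jk D N B k. Rfam D N B k u' v'). re D N x Rs)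
           \<le> ereal (phi D N x u - phi D N x v)"
proof -
  define XK where "XK = Xseq D N k"
  have gd: "good y" if "y \<in> XK" for y
  proof -
    have "y \<in> Xseq D N 1" using Xseq_sub1[OF k1] that unfolding XK_def by blast
    then show ?thesis by (rule X1_good)
  qed
  have xK: "x \<in> XK" using xk unfolding XK_def .
  have gx: "good x" using gd[OF xK] .
  note gc = good_chi[OF gx]
  have uvJ: "(u, v) \<in> Jpairs D B" using uv by blast
  obtain Q where Q: "is_jump D B u v Q" using uvJ unfolding Jpairs_def by auto
  have nconst: "\<not> (\<exists>c. \<forall>y\<in>XK. phi D N y u - phi D N y v = c)"
    using uv uvJ unfolding Jk_def XK_def by blast
  have pQ: "is_path D (arcs D) u v Q" and onu: "on_B D B u" and onv: "on_B D B v"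
    and nBQ: "\<forall>z\<in>set (butlast (map (head D) Q)). \<not> on_B D B z"
    using Q unfolding is_jump_def by auto
  have Qne: "Q \<noteq> []" and wQ: "walk D u Q v" and QA: "set Q \<subseteq> arcs D"
    and dQu: "distinct (u # map (head D) Q)" using pQ unfolding is_path_def by auto
  obtain Pu where Pu: "Pu \<in> set B" "u \<in> set (s # map (head D) Pu)" using onu unfolding on_B_def by auto
  obtain Pv where Pv: "Pv \<in> set B" "v \<in> set (s # map (head D) Pv)" using onv unfolding on_B_def by auto
  have wPu: "walk D s Pu t" and dPu: "distinct (s # map (head D) Pu)" and PuA: "set Pu \<subseteq> arcs D"
    using Bpath[OF Pu(1)] unfolding is_path_def by auto
  have wPv: "walk D s Pv t" and dPv: "distinct (s # map (head D) Pv)" and PvA: "set Pv \<subseteq> arcs D"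
    using Bpath[OF Pv(1)] unfolding is_path_def by auto
  obtain U1 U2 where U: "Pu = U1 @ U2" "walk D s U1 u" "walk D u U2 t"
    using walk_split_vertex[OF wPu Pu(2)] by blast
  obtain V1 V2 where V: "Pv = V1 @ V2" "walk D s V1 v" "walk D v V2 t"
    using walk_split_vertex[OF wPv Pv(2)] by blast
  have phiu: "phi D N y u = lenx N y U1" if "y \<in> XK" for y
    by (rule good_phi[OF gd[OF that] Pu(1) U(1) U(2) U(3)])
  have phiv: "phi D N y v = lenx N y V1" if "y \<in> XK" for y
    by (rule good_phi[OF gd[OF that] Pv(1) V(1) V(2) V(3)])
  have lenV: "lenx N y V1 + lenx N y V2 = 1" if "y \<in> XK" for y
  proof -
    have "lenx N y Pv = 1" by (rule good_lenB[OF gd[OF that] Pv(1)])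
    then have "lenx N y (V1 @ V2) = 1" using V(1) by simp
    then show ?thesis by (simp only: lenx_append)
  qed
  define d where "d = phi D N x u - phi D N x v"
  have dx: "d = lenx N x U1 - lenx N x V1" using phiu[OF xK] phiv[OF xK] unfolding d_def by simp
  have PuE: "set Pu \<subseteq> Ek D N B k" using B_in_Ek Pu(1) by blast
  have PvE: "set Pv \<subseteq> Ek D N B k" using B_in_Ek Pv(1) by blast
  define A where "A = U1 @ Q @ V2"
  have wA: "walk D s A t" unfolding A_def walk_append using U(2) wQ V(3) by blast
  have Qz: "\<forall>e\<in>set Q. e \<in> N \<longrightarrow> x e = 0"
  proof (intro ballI impI)
    fix e assume "e \<in> set Q" "e \<in> N"
    then show "x e = 0" using good_B(2)[OF gx] jump_notB[OF Q] by blast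
  qed
  show ?thesis
  proof (cases "distinct (s # map (head D) A)")
    case True
    have Aset: "set A \<subseteq> set Pu \<union> set Q \<union> set Pv" unfolding A_def using U(1) V(1) by auto
    have pA: "is_path D (Ek D N B k \<union> set Q) s t A"
      unfolding is_path_def using True wA Qne Aset PuE PvE unfolding A_def by auto
    define R where "R = N \<inter> \<Union>(set ` set [A])"
    have RA: "R = set A \<inter> N" unfolding R_def by auto
    have famA: "disj_family D (Ek D N B k \<union> set Q) [A]" by (rule disj_family_single[OF pA])
    have QsA: "set Q \<subseteq> set A" unfolding A_def by auto
    have "\<exists>Ps Q'. R = N \<inter> \<Union>(set ` set Ps) \<and> is_jump D B u v Q' \<and>
        disj_family D (Ek D N B k \<union> set Q') Ps \<and> (\<exists>P\<in>set Ps. set Q' \<subseteq> set P)"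
    proof -
      have "R = N \<inter> \<Union>(set ` set [A]) \<and> is_jump D B u v Q \<and>
        disj_family D (Ek D N B k \<union> set Q) [A] \<and> (\<exists>P\<in>set [A]. set Q \<subseteq> set P)"
        using R_def Q famA QsA by simp
      then show ?thesis by blast
    qed
    then have Rin: "R \<in> Rfam D N B k u v" unfolding Rfam_def by blast
    have dA: "distinct A" using True by (rule distinct_arcs)
    have "sum x R = lenx N x A" using lenx_distinct[OF dA] RA by simp
    also have "\<dots> = lenx N x U1 + lenx N x Q + lenx N x V2" unfolding A_def by (simp add: lenx_append)
    also have "lenx N x Q = 0" using Qz by (rule lenx_zero)
    finally have sR: "sum x R = 1 + d" using dx lenV[OF xK] by simp
    have RN: "R \<subseteq> N" using RA by auto
    have gm: "gamma D N R \<ge> 1" if "R \<noteq> N"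
    proof -
      have AA: "set A \<subseteq> arcs D" using Aset PuA PvA QA by auto
      have "is_path D (R \<union> (arcs D - N)) s t A"
        using True wA Qne AA RA unfolding is_path_def A_def by auto
      then have "disj_family D (R \<union> (arcs D - N)) [A]" by (rule disj_family_single)
      moreover have "R \<subseteq> arcs D" using RN NA by auto
      ultimately have "length [A] \<le> gamma D N R" by (rule gamma_ge)
      then show ?thesis by simp
    qed
    have reR: "re D N x R \<le> ereal d" by (rule re_le[OF gx RN]) (use sR gm in auto)
    have "R \<in> (\<Union>(u',v')\<in>Jpairs D B - Jk D N B k. Rfam D N B k u' v')" using Rin uv by blast
    then have "(INF Rs\<in>(\<Union>(u',v')\<in>Jpairs D B - Jk D N B k. Rfam D N B k u' v'). re D N x Rs) \<le> re D N x R"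
      by (rule INF_lower)
    then have "(INF Rs\<in>(\<Union>(u',v')\<in>Jpairs D B - Jk D N B k. Rfam D N B k u' v'). re D N x Rs) \<le> ereal d"
      using reR by (rule order_trans)
    then show ?thesis unfolding d_def by (rule min.coboundedI2)
  next
    case False
    have dU1: "distinct (s # map (head D) U1)" using dPu U(1) by simp
    have vV1: "v \<in> set (s # map (head D) V1)" by (rule walk_end[OF V(2)])
    have dsplit: "distinct (s # map (head D) V1) \<and> distinct (map (head D) V2) \<and>
       set (s # map (head D) V1) \<inter> set (map (head D) V2) = {}"
    proof -
      have "distinct ((s # map (head D) V1) @ map (head D) V2)" using dPv V(1) by simp
      then show ?thesis by (rule iffD1[OF distinct_append])
    qed
    have dV2: "distinct (map (head D) V2)" using dsplit by blast
    have vnV2: "v \<notin> set (map (head D) V2)" using dsplit vV1 by blast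
    have dQ: "distinct (map (head D) Q)" using dQu by simp
    have vlast: "v = last (map (head D) Q)" by (rule walk_Nil_end[OF wQ Qne])
    have lastQ: "map (head D) Q = butlast (map (head D) Q) @ [v]"
      using vlast Qne by simp
    have onX1: "on_B D B z" if "z \<in> set (s # map (head D) U1)" for z
    proof -
      have "z \<in> set (s # map (head D) Pu)" using that U(1) by auto
      then show ?thesis using Pu(1) unfolding on_B_def by blast
    qed
    have onX3: "on_B D B z" if "z \<in> set (map (head D) V2)" for z
    proof -
      have "z \<in> set (s # map (head D) Pv)" using that V(1) by auto
      then show ?thesis using Pv(1) unfolding on_B_def by blast
    qed
    have eqA: "s # map (head D) A = (s # map (head D) U1) @ map (head D) Q @ map (head D) V2"
      unfolding A_def by simp
    have d23: "distinct (map (head D) Q @ map (head D) V2)"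
    proof -
      have "set (map (head D) Q) \<inter> set (map (head D) V2) = {}"
      proof (rule ccontr)
        assume "set (map (head D) Q) \<inter> set (map (head D) V2) \<noteq> {}"
        then obtain z where z: "z \<in> set (map (head D) Q)" "z \<in> set (map (head D) V2)" by blast
        have "z \<in> set (butlast (map (head D) Q)) \<or> z = v" using z(1) lastQ
          by (metis Un_iff empty_iff empty_set insert_iff list.set(2) set_append)
        then show False using z(2) onX3 nBQ vnV2 by blast
      qed
      then show ?thesis using dQ dV2 by simp
    qed
    have "set (s # map (head D) U1) \<inter> set (map (head D) Q @ map (head D) V2) \<noteq> {}"
      using False eqA dU1 d23 by (metis distinct_append)
    then obtain z where z: "z \<in> set (s # map (head D) U1)" "z \<in> set (map (head D) Q @ map (head D) V2)"
      by blast
    have w2: "z \<in> set (v # map (head D) V2)"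
    proof -
      have "z \<in> set (map (head D) Q) \<or> z \<in> set (map (head D) V2)" using z(2) by simp
      moreover have "z \<notin> set (butlast (map (head D) Q))" using onX1[OF z(1)] nBQ by blast
      moreover have "z \<in> set (map (head D) Q) \<Longrightarrow> z \<in> set (butlast (map (head D) Q)) \<or> z = v"
        using lastQ by (metis Un_iff empty_iff empty_set insert_iff list.set(2) set_append)
      ultimately show ?thesis by auto
    qed
    obtain U11 U12 where U1s: "U1 = U11 @ U12" "walk D s U11 z" "walk D z U12 u"
      using walk_split_vertex[OF U(2) z(1)] by blast
    obtain V21 V22 where V2s: "V2 = V21 @ V22" "walk D v V21 z" "walk D z V22 t"
      using walk_split_vertex[OF V(3) w2] by blast
    have phiw1: "phi D N y z = lenx N y U11" if "y \<in> XK" for y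
    proof (rule good_phi[OF gd[OF that] Pu(1)])
      show "Pu = U11 @ (U12 @ U2)" using U(1) U1s(1) by simp
      show "walk D s U11 z" by (rule U1s(2))
      show "walk D z (U12 @ U2) t" unfolding walk_append using U1s(3) U(3) by blast
    qed
    have phiw2: "phi D N y z = lenx N y (V1 @ V21)" if "y \<in> XK" for y
    proof (rule good_phi[OF gd[OF that] Pv(1)])
      show "Pv = (V1 @ V21) @ V22" using V(1) V2s(1) by simp
      show "walk D s (V1 @ V21) z" unfolding walk_append using V(2) V2s(2) by blast
      show "walk D z V22 t" by (rule V2s(3))
    qed
    define L where "L = U12 @ V21"
    have diff: "phi D N y u - phi D N y v = lenx N y L" if "y \<in> XK" for y
    proof -
      have "phi D N y u = lenx N y U11 + lenx N y U12" using phiu[OF that] U1s(1) by (simp add: lenx_append)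
      moreover have "phi D N y v = lenx N y V1" by (rule phiv[OF that])
      moreover have "lenx N y U11 = lenx N y V1 + lenx N y V21"
        using phiw1[OF that] phiw2[OF that] by (simp add: lenx_append)
      ultimately show ?thesis unfolding L_def by (simp add: lenx_append)
    qed
    obtain e where e: "e \<in> set L" "e \<in> N" "e \<notin> Nk D N k"
    proof (rule ccontr)
      assume "\<not> thesis"
      then have allk: "\<forall>e\<in>set L. e \<in> N \<longrightarrow> e \<in> Nk D N k" using that by blast
      have "lenx N y L = lenx N x L" if y: "y \<in> XK" for y
        unfolding lenx_def
      proof (rule arg_cong[where f = sum_list], rule map_cong)
        fix e assume eL: "e \<in> set L"
        show "(if e \<in> N then y e else 0) = (if e \<in> N then x e else 0)"
        proof (cases "e \<in> N")
          case True
          then have "e \<in> Nk D N k" using allk eL by blast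
          then obtain c where c: "\<forall>z\<in>XK. z e = c" unfolding Nk_def XK_def by blast
          have "y e = c" using c y by blast
          moreover have "x e = c" using c xK by blast
          ultimately show ?thesis by simp
        qed simp
      qed simp
      then have "\<forall>y\<in>XK. phi D N y u - phi D N y v = lenx N x L" using diff by simp
      then show False using nconst by blast
    qed
    have dL: "d = lenx N x L" using diff[OF xK] unfolding d_def by simp
    have xe: "x e \<le> d" using lenx_elem[of N x e L] gc e(1,2) dL by simp
    have "e \<in> set Pu \<or> e \<in> set Pv" using e(1) U(1) U1s(1) V(1) V2s(1) unfolding L_def by auto
    then obtain p where p: "p \<in> set B" "e \<in> set p" using Pu(1) Pv(1) by blast
    obtain i where i: "i < \<sigma>" "B!i = p" using p(1) Blen by (auto simp: in_set_conv_nth)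
    define j where "j = (if i = 0 then 1 else (0::nat))"
    have j: "j < \<sigma>" "j \<noteq> i" using sig2 i(1) unfolding j_def by auto
    define P' where "P' = B!j"
    have P'B: "P' \<in> set B" using j(1) Blen unfolding P'_def by simp
    have eP': "e \<notin> set P'" using Bdisj[OF i(1) j(1) j(2)[symmetric]] i(2) p(2) e(2) unfolding P'_def by blast
    have pP': "is_path D (arcs D) s t P'" by (rule Bpath[OF P'B])
    have P'E: "set P' \<subseteq> Ek D N B k - {e}" using B_in_Ek P'B eP' by blast
    have pP'E: "is_path D (Ek D N B k - {e}) s t P'"
      using pP' P'E unfolding is_path_def by auto
    define Os where "Os = (N \<inter> \<Union>(set ` set [P'])) \<union> {e}"
    have "\<exists>Ps. Os = (N \<inter> \<Union>(set ` set Ps)) \<union> {e} \<and> disj_family D (Ek D N B k - {e}) Ps"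
      using Os_def disj_family_single[OF pP'E] by blast
    then have Oin: "Os \<in> Ofam D N B k e" unfolding Ofam_def by blast
    have Os2: "Os = insert e (set P' \<inter> N)" unfolding Os_def by auto
    have "sum x Os = x e + sum x (set P' \<inter> N)" unfolding Os2 using eP' by (simp add: sum.insert)
    moreover have "sum x (set P' \<inter> N) = 1" using good_B(1)[OF gx] j(1) unfolding P'_def by blast
    ultimately have sO: "sum x Os \<le> 1 + d" using xe by simp
    have ON: "Os \<subseteq> N" using Os2 e(2) by auto
    have gm: "gamma D N Os \<ge> 1" if "Os \<noteq> N"
    proof -
      have "is_path D (Os \<union> (arcs D - N)) s t P'"
        using pP' Os2 unfolding is_path_def by auto
      then have "disj_family D (Os \<union> (arcs D - N)) [P']" by (rule disj_family_single)
      moreover have "Os \<subseteq> arcs D" using ON NA by auto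
      ultimately have "length [P'] \<le> gamma D N Os" by (rule gamma_ge)
      then show ?thesis by simp
    qed
    have reO: "re D N x Os \<le> ereal d" by (rule re_le[OF gx ON]) (use sO gm in auto)
    have "Os \<in> (\<Union>e\<in>N - Nk D N k. Ofam D N B k e)" using Oin e(2,3) by blast
    then have "(INF Oe\<in>(\<Union>e\<in>N - Nk D N k. Ofam D N B k e). re D N x Oe) \<le> re D N x Os"
      by (rule INF_lower)
    then have "(INF Oe\<in>(\<Union>e\<in>N - Nk D N k. Ofam D N B k e). re D N x Oe) \<le> ereal d"
      using reO by (rule order_trans)
    then show ?thesis unfolding d_def by (rule min.coboundedI1)
  qed
qed

end

theorem lemma15:
  fixes D :: "('v,'e) network" and N :: "'e set" and B :: "'e list list"
    and k :: nat and x :: "'e \<Rightarrow> real" and u v :: 'v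
  assumes "finite (verts D)" and "finite (arcs D)"
    and "\<forall>e\<in>arcs D. tail D e \<in> verts D \<and> head D e \<in> verts D"
    and "src D \<in> verts D" and "snk D \<in> verts D" and "src D \<noteq> snk D"
    and "N \<subseteq> arcs D"
    and "\<forall>p. is_path D (arcs D) (src D) (snk D) p \<longrightarrow> set p \<inter> N \<noteq> {}"
    and "\<forall>e\<in>arcs D. \<exists>p. is_path D (arcs D) (src D) (snk D) p \<and> e \<in> set p"
    and "sigmaN D N \<ge> 2"
    and "Ndisj_family D N B" and "length B = sigmaN D N"
    and "k \<ge> 1"
    and "x \<in> Xseq D N k"
    and "(u, v) \<in> Jpairs D B - Jk D N B k"
  shows "min (INF Oe\<in>(\<Union>e\<in>N - Nk D N k. Ofam D N B k e). re D N x Oe)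
             (INF Rs\<in>(\<Union>(u',v')\<in>Jpairs D B - Jk D N B k. Rfam D N B k u' v'). re D N x Rs)
           \<le> ereal (phi D N x u - phi D N x v)"
proof -
  interpret netw D N B by (rule netw.intro) (use assms in auto)
  show ?thesis by (rule main) (use assms in auto)
qed

end
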